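(* Let $N\ge16$ be an integer and $\rho\in[2/3,1)$. Then for every $k\ge0$, $1\le j\le 2^k$ and every $y\in L^k_j$, $$H_\flat\widehat\omega(y)=\int K_\flat(y-x)\,d\widehat\omega(x)=0$$ (the integral being absolutely convergent since $y$ has positive distance from $\mathsf E^{(N)}$). In particular $H_\flat\widehat\omega(\dot z^k_j)=0$ for all $k,j$.
   Context: Cantor intervals: fix an integer $N\ge16$ and $\rho\in[2/3,1)$. Set $I^0_1=[0,1]$. Each interval $I=[a,a+N^{-k}]$ of generation $k$ has two children of generation $k+1$: the left child $I_-=[a,a+N^{-k-1}]$ and the right child $I_+=[a+N^{-k}-N^{-k-1},a+N^{-k}]$. The $2^k$ intervals of generation $k$ are denoted $I^k_j$, $1\le j\le 2^k$, numbered left to right; $\mathcal D$ is the collection of all of them. $G^k_j$ is the open middle gap $I^k_j\setminus((I^k_j)_-\cup(I^k_j)_+)$, $\dot z^k_j$ is the common center of $I^k_j$ and $G^k_j$, and $L^k_j=[\dot z^k_j-N^{-k-1},\dot z^k_j+N^{-k-1}]$. The Cantor set is $\mathsf E^{(N)}=\bigcap_{k}\bigcup_{j}I^k_j$. Redistributed Cantor measure: with $\eta=1/N$, $\widehat\omega$ is the unique Borel probability measure supported on $\mathsf E^{(N)}$ such that $\widehat\omega(I^1_1)=\widehat\omega(I^1_2)=\frac12$ and for every $I\in\mathcal D$ of generation $\ge1$: if $I$ is the left child of its parent then $\widehat\omega(I_-)=\frac{1+\eta}2\widehat\omega(I)$, $\widehat\omega(I_+)=\frac{1-\eta}2\widehat\omega(I)$;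 if $I$ is the right child of its parent then $\widehat\omega(I_-)=\frac{1-\eta}2\widehat\omega(I)$, $\widehat\omega(I_+)=\frac{1+\eta}2\widehat\omega(I)$. Flattened kernel: $K_\flat$ is defined first on $[N^{-1/2},N^{1/2}]$ as a smooth nonincreasing function with values in $[N^{-1/2},N^{1/2}]$ such that $K_\flat(x)=1/x$ for $N^{-1/2}\le x\le(\rho N)^{-1/2}$ and for $(\rho N)^{1/2}\le x\le N^{1/2}$, and $K_\flat(x)=1$ for $(\rho^2N)^{-1/2}\le x\le(\rho^2N)^{1/2}$; then extended to $(0,\infty)$ by $K_\flat(x)=N^{-k}K_\flat(N^{-k}x)$ for $x\in[N^{k-1/2},N^{k+1/2}]$, $k\in\mathbb Z$, and to $\mathbb R\setminus\{0\}$ as an odd function. $H_\flat\mu(x)=\int K_\flat(x-y)\,d\mu(y)$. *)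

theory Defs
  imports "HOL-Probability.Probability"
begin

text \<open>Generation k, index j with 1 \<le> j \<le> 2^k, numbered left to right.
  The children of I k j are I (k+1) (2j-1) (left child) and I (k+1) (2j) (right child).
  cantor_left N k j is the left endpoint of I k j.\<close>

fun cantor_left :: "nat \<Rightarrow> nat \<Rightarrow> nat \<Rightarrow> real" where
  "cantor_left N 0 j = 0"
| "cantor_left N (Suc k) j =
     cantor_left N k ((j + 1) div 2)
     + (if even j then (1 / real N) ^ k - (1 / real N) ^ Suc k else 0)"

definition cantor_int :: "nat \<Rightarrow> nat \<Rightarrow> nat \<Rightarrow> real set" where
  "cantor_int N k j = {cantor_left N k j .. cantor_left N k j + (1 / real N) ^ k}"

definition cantor_center :: "nat \<Rightarrow> nat \<Rightarrow> nat \<Rightarrow> real" where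
  "cantor_center N k j = cantor_left N k j + (1 / real N) ^ k / 2"

definition cantor_L :: "nat \<Rightarrow> nat \<Rightarrow> nat \<Rightarrow> real set" where
  "cantor_L N k j = {cantor_center N k j - (1 / real N) ^ Suc k ..
                     cantor_center N k j + (1 / real N) ^ Suc k}"

definition cantor_set :: "nat \<Rightarrow> real set" where
  "cantor_set N = (\<Inter>k. \<Union>j\<in>{1..2^k}. cantor_int N k j)"

text \<open>The redistributed Cantor measure (eta = 1/N): a Borel probability measure
  supported on the Cantor set with the prescribed masses.\<close>
definition redistributed_cantor_measure :: "nat \<Rightarrow> real measure \<Rightarrow> bool" where
  "redistributed_cantor_measure N M \<longleftrightarrow>
     sets M = sets borel \<and> prob_space M \<and>
     emeasure M (UNIV - cantor_set N) = 0 \<and>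
     measure M (cantor_int N 1 1) = 1/2 \<and> measure M (cantor_int N 1 2) = 1/2 \<and>
     (\<forall>k\<ge>1. \<forall>j\<in>{1..2^k}.
        (odd j \<longrightarrow>
           measure M (cantor_int N (Suc k) (2*j - 1)) = (1 + 1/real N) / 2 * measure M (cantor_int N k j) \<and>
           measure M (cantor_int N (Suc k) (2*j)) = (1 - 1/real N) / 2 * measure M (cantor_int N k j)) \<and>
        (even j \<longrightarrow>
           measure M (cantor_int N (Suc k) (2*j - 1)) = (1 - 1/real N) / 2 * measure M (cantor_int N k j) \<and>
           measure M (cantor_int N (Suc k) (2*j)) = (1 + 1/real N) / 2 * measure M (cantor_int N k j)))"

text \<open>Smoothness of the restriction to the closed
  interval [N^(-1/2), N^(1/2)] is expressed by infinite differentiability on the open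
  interval; near both endpoints K is 1/x anyway.\<close>
definition flat_kernel :: "nat \<Rightarrow> real \<Rightarrow> (real \<Rightarrow> real) \<Rightarrow> bool" where
  "flat_kernel N \<rho> K \<longleftrightarrow>
     (\<forall>n. \<forall>x\<in>{real N powr (-1/2) <..< real N powr (1/2)}. (deriv ^^ n) K differentiable (at x)) \<and>
     (\<forall>x\<in>{real N powr (-1/2) .. real N powr (1/2)}. \<forall>x'\<in>{real N powr (-1/2) .. real N powr (1/2)}.
         x \<le> x' \<longrightarrow> K x' \<le> K x) \<and>
     (\<forall>x\<in>{real N powr (-1/2) .. real N powr (1/2)}.
         K x \<in> {real N powr (-1/2) .. real N powr (1/2)}) \<and>
     (\<forall>x\<in>{real N powr (-1/2) .. (\<rho> * real N) powr (-1/2)}. K x = 1 / x) \<and>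
     (\<forall>x\<in>{(\<rho> * real N) powr (1/2) .. real N powr (1/2)}. K x = 1 / x) \<and>
     (\<forall>x\<in>{(\<rho>^2 * real N) powr (-1/2) .. (\<rho>^2 * real N) powr (1/2)}. K x = 1) \<and>
     (\<forall>k::int. \<forall>x\<in>{real N powr (real_of_int k - 1/2) .. real N powr (real_of_int k + 1/2)}.
         K x = real N powr (- real_of_int k) * K (real N powr (- real_of_int k) * x)) \<and>
     (\<forall>x. x \<noteq> 0 \<longrightarrow> K (- x) = - K x)"

definition H_flat :: "(real \<Rightarrow> real) \<Rightarrow> real measure \<Rightarrow> real \<Rightarrow> real" where
  "H_flat K \<mu> y = (\<integral>x. K (y - x) \<partial>\<mu>)"

end

theory Submission
  imports Defs
begin


lemma cl_odd: "1 \<le> j \<Longrightarrow> cantor_left N (Suc k) (2*j-1) = cantor_left N k j"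
proof -
  assume "1 \<le> j"
  then have "(2*j-1+1) div 2 = j" "\<not> even (2*j-1)" by auto
  then show ?thesis by simp
qed

lemma cl_even: "cantor_left N (Suc k) (2*j) = cantor_left N k j + (1/real N)^k - (1/real N)^Suc k"
proof -
  have "(2*j+1) div 2 = j" by auto
  then show ?thesis by simp
qed

lemma cl_parent:
  assumes "N \<ge> 16"
  shows "cantor_left N k ((j+1) div 2) \<le> cantor_left N (Suc k) j \<and>
         cantor_left N (Suc k) j + (1/real N)^Suc k \<le> cantor_left N k ((j+1) div 2) + (1/real N)^k"
proof -
  have a: "(1/real N)^Suc k \<le> (1/real N)^k"
    using assms by (intro power_decreasing) (auto simp: field_simps)
  show ?thesis using a by auto
qed

lemma cl_order:
  assumes "N \<ge> 16"
  shows "\<forall>j j'. 1 \<le> j \<longrightarrow> j < j' \<longrightarrow> j' \<le> 2^k \<longrightarrow> cantor_left N k j + (1/real N)^k < cantor_left N k j'"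
proof (induction k)
  case 0
  then show ?case by auto
next
  case (Suc k)
  show ?case
  proof (intro allI impI)
    fix j j' :: nat assume j: "1 \<le> j" "j < j'" "j' \<le> 2^Suc k"
    define p where "p = (j+1) div 2"
    define p' where "p' = (j'+1) div 2"
    have pp: "p \<le> p'" unfolding p_def p'_def using j by (intro div_le_mono) auto
    have p1: "1 \<le> p" "p' \<le> 2^k" using j unfolding p_def p'_def by auto
    have d: "2 * (1/real N)^Suc k < (1/real N)^k" using assms
      by (simp add: field_simps)
    have A: "cantor_left N k p \<le> cantor_left N (Suc k) j'" if "p = p'"
      using cl_parent[OF assms, of k j'] that p'_def by simp
    show "cantor_left N (Suc k) j + (1/real N)^Suc k < cantor_left N (Suc k) j'"
    proof (cases "p = p'")
      case True
      then have "odd j" "even j'" using j unfolding p_def p'_def by presburger+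
      then show ?thesis using True d unfolding p_def p'_def by simp
    next
      case False
      then have "p < p'" using pp by simp
      then have "cantor_left N k p + (1/real N)^k < cantor_left N k p'" using Suc.IH p1 by auto
      then show ?thesis using cl_parent[OF assms, of k j, folded p_def] cl_parent[OF assms, of k j', folded p'_def] by linarith
    qed
  qed
qed

lemma child_sub:
  assumes "N \<ge> 16" "1 \<le> i"
  shows "cantor_int N (Suc k) i \<subseteq> cantor_int N k ((i+1) div 2)"
  using cl_parent[OF assms(1), of k i] unfolding cantor_int_def by auto

lemma children_sub:
  assumes "N \<ge> 16" "1 \<le> j"
  shows "cantor_int N (Suc k) (2*j-1) \<subseteq> cantor_int N k j" "cantor_int N (Suc k) (2*j) \<subseteq> cantor_int N k j"
proof -
  have "(2*j-1+1) div 2 = j" "(2*j+1) div 2 = j" using assms by auto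
  then show "cantor_int N (Suc k) (2*j-1) \<subseteq> cantor_int N k j" "cantor_int N (Suc k) (2*j) \<subseteq> cantor_int N k j"
    using child_sub[OF assms(1), of "2*j-1" k] child_sub[OF assms(1), of "2*j" k] assms(2) by auto
qed

lemma children_disj:
  assumes "N \<ge> 16" "1 \<le> j"
  shows "cantor_int N (Suc k) (2*j-1) \<inter> cantor_int N (Suc k) (2*j) = {}"
proof -
  have d: "2 * (1/real N)^Suc k < (1/real N)^k" using assms
    by (simp add: field_simps)
  show ?thesis unfolding cantor_int_def cl_odd[OF assms(2)] cl_even using d by auto
qed

lemma cantor_split:
  assumes "N \<ge> 16" "x \<in> cantor_set N" "x \<in> cantor_int N k j" "1 \<le> j" "j \<le> 2^k"
  shows "x \<in> cantor_int N (Suc k) (2*j-1) \<or> x \<in> cantor_int N (Suc k) (2*j)"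
proof -
  obtain i where i: "i \<in> {1..2^Suc k}" "x \<in> cantor_int N (Suc k) i"
    using assms(2) unfolding cantor_set_def by blast
  define p where "p = (i+1) div 2"
  have p: "1 \<le> p" "p \<le> 2^k" using i unfolding p_def by auto
  have xp: "x \<in> cantor_int N k p" using child_sub[OF assms(1), of i k] i unfolding p_def by auto
  have "p = j"
  proof (rule ccontr)
    assume "p \<noteq> j"
    then have "p < j \<or> j < p" by auto
    then show False
    proof
      assume "p < j"
      then have "cantor_left N k p + (1/real N)^k < cantor_left N k j" using cl_order[OF assms(1), of k] p assms by auto
      then show False using xp assms(3) unfolding cantor_int_def by auto
    next
      assume "j < p"
      then have "cantor_left N k j + (1/real N)^k < cantor_left N k p" using cl_order[OF assms(1), of k] p assms by auto
      then show False using xp assms(3) unfolding cantor_int_def by auto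
    qed
  qed
  then have "i = 2*j-1 \<or> i = 2*j" unfolding p_def by presburger
  then show ?thesis using i by auto
qed

lemma cantor_sub01: "cantor_set N \<subseteq> cantor_int N 0 1"
proof
  fix x assume "x \<in> cantor_set N"
  then have "\<exists>j\<in>{1..2^0}. x \<in> cantor_int N 0 j" unfolding cantor_set_def by blast
  then show "x \<in> cantor_int N 0 1" by auto
qed


lemma fk_scale: "flat_kernel N \<rho> K \<Longrightarrow> x \<in> {real N powr (real_of_int k - 1/2) .. real N powr (real_of_int k + 1/2)} \<Longrightarrow>
         K x = real N powr (- real_of_int k) * K (real N powr (- real_of_int k) * x)"
  unfolding flat_kernel_def by blast
lemma fk_one: "flat_kernel N \<rho> K \<Longrightarrow> x\<in>{(\<rho>^2 * real N) powr (-1/2) .. (\<rho>^2 * real N) powr (1/2)} \<Longrightarrow> K x = 1"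
  unfolding flat_kernel_def by blast
lemma fk_odd: "flat_kernel N \<rho> K \<Longrightarrow> x \<noteq> 0 \<Longrightarrow> K (- x) = - K x"
  unfolding flat_kernel_def by blast
lemma fk_mono: "flat_kernel N \<rho> K \<Longrightarrow> x\<in>{real N powr (-1/2) .. real N powr (1/2)} \<Longrightarrow> x'\<in>{real N powr (-1/2) .. real N powr (1/2)} \<Longrightarrow>
         x \<le> x' \<Longrightarrow> K x' \<le> K x"
  unfolding flat_kernel_def by blast
lemma K_const:
  assumes N: "N \<ge> 16" and r: "2/3 \<le> \<rho>" "\<rho> < 1" and K: "flat_kernel N \<rho> K"
    and x: "3/8 * (1/real N)^m \<le> x" "x \<le> (1/real N)^m"
  shows "K x = real N ^ m"
proof -
  have Np: "real N > 0" using N by simp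
  have sN: "sqrt (real N) \<ge> 4" using N by (simp add: real_le_rsqrt)
  have a: "real N powr (- real m) = (1/real N)^m" using Np by (simp add: powr_minus powr_realpow power_one_over inverse_eq_divide)
  have a': "real N powr (real m) = real N ^ m" using Np by (simp add: powr_realpow)
  have b: "real N powr (1/2) = sqrt (real N)" by (simp add: powr_half_sqrt)
  have e1': "real N powr (real_of_int (- int m) - 1/2) = real N powr (- real m) / real N powr (1/2)"
    by (simp add: powr_diff)
  have e1: "real N powr (real_of_int (- int m) - 1/2) = (1/real N)^m * (1 / sqrt (real N))"
    unfolding e1' a b by simp
  have e2': "real N powr (real_of_int (- int m) + 1/2) = real N powr (- real m) * real N powr (1/2)"
    by (subst powr_add[symmetric]) simp
  have e2: "real N powr (real_of_int (- int m) + 1/2) = (1/real N)^m * sqrt (real N)"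
    unfolding e2' a b by simp
  have e3: "real N powr (- real_of_int (- int m)) = real N ^ m"
    using a' by simp
  have dpos: "(1/real N)^m > 0" using Np by simp
  have "1 / sqrt (real N) \<le> 1/4" using sN Np by (intro divide_left_mono) auto
  then have "1 / sqrt (real N) \<le> 3/8" by simp
  then have "(1/real N)^m * (1 / sqrt (real N)) \<le> (1/real N)^m * (3/8)"
    using dpos by (intro mult_left_mono) auto
  then have l1: "(1/real N)^m * (1 / sqrt (real N)) \<le> x"
    using x(1) by linarith
  have "(1/real N)^m \<le> (1/real N)^m * sqrt (real N)" using sN dpos N by simp
  then have l2: "x \<le> (1/real N)^m * sqrt (real N)" using x(2) by linarith
  have scale: "K x = real N powr (- real_of_int (- int m)) * K (real N powr (- real_of_int (- int m)) * x)"
    using fk_scale[OF K, of x "- int m"] l1 l2 unfolding e1 e2 by simp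
  have y: "3/8 \<le> real N ^ m * x" "real N ^ m * x \<le> 1"
  proof -
    have "real N ^ m * (1/real N)^m = 1" using Np by (simp add: power_one_over field_simps)
    moreover have "real N ^ m * (3/8 * (1/real N)^m) \<le> real N ^ m * x"
      using x(1) Np by (intro mult_left_mono) auto
    moreover have "real N ^ m * x \<le> real N ^ m * (1/real N)^m"
      using x(2) Np by (intro mult_left_mono) auto
    ultimately show "3/8 \<le> real N ^ m * x" "real N ^ m * x \<le> 1" by (simp_all add: algebra_simps)
  qed
  have rr: "\<rho>^2 * real N \<ge> 64/9"
  proof -
    have "\<rho>^2 \<ge> (2/3)^2" using r by (intro power_mono) auto
    moreover have "real N \<ge> 16" using N by simp
    ultimately have "\<rho>^2 * real N \<ge> (2/3)^2 * 16" by (intro mult_mono) auto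
    moreover have "(2/3::real)^2 * 16 = 64/9" by (simp add: power2_eq_square)
    ultimately show ?thesis by linarith
  qed
  have sr: "sqrt (\<rho>^2 * real N) \<ge> 8/3"
  proof -
    have "sqrt (64/9) \<le> sqrt (\<rho>^2 * real N)" using rr by simp
    moreover have "sqrt (64/9::real) = 8/3" by (simp add: real_sqrt_divide)
    ultimately show ?thesis by simp
  qed
  have c1: "(\<rho>^2 * real N) powr (-1/2) \<le> 3/8"
    using sr rr by (simp add: powr_minus_divide powr_half_sqrt field_simps)
  have c2: "1 \<le> (\<rho>^2 * real N) powr (1/2)"
    using sr rr by (simp add: powr_half_sqrt)
  have "K (real N ^ m * x) = 1" using fk_one[OF K] c1 c2 y by auto
  then show ?thesis using scale e3 by simp
qed



lemma dfacts:
  assumes "N \<ge> 16"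
  shows "(1/real N)^Suc k = (1/real N)^k / real N" "16*(1/real N)^Suc k \<le> (1/real N)^k"
        "0 < (1/real N)^k"
proof -
  show "(1/real N)^Suc k = (1/real N)^k / real N" by simp
  have "16 * (1/real N) \<le> 1" using assms by (simp add: field_simps)
  then have "(1/real N)^k * (16 * (1/real N)) \<le> (1/real N)^k * 1" by (intro mult_left_mono) auto
  then show "16*(1/real N)^Suc k \<le> (1/real N)^k" by (simp add: algebra_simps)
  show "0 < (1/real N)^k" using assms by simp
qed

lemma LK:
  assumes N: "N \<ge> 16" and r: "2/3 \<le> \<rho>" "\<rho> < 1" and K: "flat_kernel N \<rho> K"
    and j: "1 \<le> j" and y: "y \<in> cantor_L N k j"
  shows "x \<in> cantor_int N (Suc k) (2*j-1) \<Longrightarrow> K (y - x) = real N ^ k"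
    and "x \<in> cantor_int N (Suc k) (2*j) \<Longrightarrow> K (y - x) = -(real N ^ k)"
proof -
  note df = dfacts[OF N, of k]
  have yb: "cantor_left N k j + (1/real N)^k/2 - (1/real N)^Suc k \<le> y"
           "y \<le> cantor_left N k j + (1/real N)^k/2 + (1/real N)^Suc k"
    using y unfolding cantor_L_def cantor_center_def by auto
  have d'0: "0 \<le> (1/real N)^Suc k" by simp
  {
    assume "x \<in> cantor_int N (Suc k) (2*j-1)"
    then have "cantor_left N k j \<le> x" "x \<le> cantor_left N k j + (1/real N)^Suc k"
      unfolding cantor_int_def cl_odd[OF j] by auto
    then have "3/8 * (1/real N)^k \<le> y - x" "y - x \<le> (1/real N)^k" using yb df d'0 by linarith+
    then show "K (y - x) = real N ^ k" using K_const[OF N r K] by blast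
  }
  {
    assume "x \<in> cantor_int N (Suc k) (2*j)"
    then have "cantor_left N k j + (1/real N)^k - (1/real N)^Suc k \<le> x" "x \<le> cantor_left N k j + (1/real N)^k"
      unfolding cantor_int_def cl_even by auto
    then have a: "3/8 * (1/real N)^k \<le> x - y" "x - y \<le> (1/real N)^k" using yb df d'0 by linarith+
    then have "K (x - y) = real N ^ k" using K_const[OF N r K] by blast
    moreover have "x - y \<noteq> 0" using a df by linarith
    ultimately show "K (y - x) = -(real N ^ k)" using fk_odd[OF K, of "x - y"] by simp
  }
qed

lemma Sib:
  assumes N: "N \<ge> 16" and r: "2/3 \<le> \<rho>" "\<rho> < 1" and K: "flat_kernel N \<rho> K"
    and j: "1 \<le> j" and y: "y \<in> cantor_int N (Suc k) (2*j-1)" and x: "x \<in> cantor_int N (Suc k) (2*j)"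
  shows "K (x - y) = real N ^ k" "K (y - x) = -(real N ^ k)"
proof -
  note df = dfacts[OF N, of k]
  have d'0: "0 \<le> (1/real N)^Suc k" by simp
  have "cantor_left N k j \<le> y" "y \<le> cantor_left N k j + (1/real N)^Suc k"
    using y unfolding cantor_int_def cl_odd[OF j] by auto
  moreover have "cantor_left N k j + (1/real N)^k - (1/real N)^Suc k \<le> x" "x \<le> cantor_left N k j + (1/real N)^k"
    using x unfolding cantor_int_def cl_even by auto
  ultimately have a: "3/8 * (1/real N)^k \<le> x - y" "x - y \<le> (1/real N)^k" using df d'0 by linarith+
  then show "K (x - y) = real N ^ k" using K_const[OF N r K] by blast
  moreover have "x - y \<noteq> 0" using a df by linarith
  ultimately show "K (y - x) = -(real N ^ k)" using fk_odd[OF K, of "x - y"] by simp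
qed

lemma outside_const:
  assumes N: "N \<ge> 16" and r: "2/3 \<le> \<rho>" "\<rho> < 1" and K: "flat_kernel N \<rho> K"
  shows "\<forall>j. 1 \<le> j \<longrightarrow> j \<le> 2^k \<longrightarrow> (\<forall>x\<in>cantor_set N. x \<notin> cantor_int N k j \<longrightarrow>
           (\<forall>y y'. y \<in> cantor_int N k j \<longrightarrow> y' \<in> cantor_int N k j \<longrightarrow> K (y - x) = K (y' - x)))"
proof (induction k)
  case 0
  then show ?case using cantor_sub01[of N] by auto
next
  case (Suc k)
  show ?case
  proof (intro allI impI ballI)
    fix j x y y' assume j: "1 \<le> j" "j \<le> 2^Suc k" and x: "x \<in> cantor_set N" "x \<notin> cantor_int N (Suc k) j"
      and y: "y \<in> cantor_int N (Suc k) j" "y' \<in> cantor_int N (Suc k) j"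
    define p where "p = (j+1) div 2"
    have p: "1 \<le> p" "p \<le> 2^k" using j unfolding p_def by auto
    have yp: "y \<in> cantor_int N k p" "y' \<in> cantor_int N k p"
      using y child_sub[OF N j(1), of k] unfolding p_def by auto
    show "K (y - x) = K (y' - x)"
    proof (cases "x \<in> cantor_int N k p")
      case False
      then show ?thesis using Suc.IH p x yp by blast
    next
      case True
      have xs: "x \<in> cantor_int N (Suc k) (2*p-1) \<or> x \<in> cantor_int N (Suc k) (2*p)"
        using cantor_split[OF N x(1) True p] .
      have "j = 2*p-1 \<or> j = 2*p" unfolding p_def by presburger
      then show ?thesis
      proof
        assume jj: "j = 2*p-1"
        then have "x \<in> cantor_int N (Suc k) (2*p)" using xs x by auto
        then show ?thesis using Sib(2)[OF N r K p(1), of y k x] Sib(2)[OF N r K p(1), of y' k x] y jj by simp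
      next
        assume jj: "j = 2*p"
        then have "x \<in> cantor_int N (Suc k) (2*p-1)" using xs x by auto
        then show ?thesis using Sib(1)[OF N r K p(1), of x k y] Sib(1)[OF N r K p(1), of x k y'] y jj by simp
      qed
    qed
  qed
qed



lemma K_block_anti:
  assumes N: "N \<ge> 16" and K: "flat_kernel N \<rho> K"
    and x: "x \<in> {real N powr (real_of_int k - 1/2) .. real N powr (real_of_int k + 1/2)}"
    and x': "x' \<in> {real N powr (real_of_int k - 1/2) .. real N powr (real_of_int k + 1/2)}"
    and le: "x \<le> x'"
  shows "K x' \<le> K x"
proof -
  define c where "c = real N powr (- real_of_int k)"
  have c0: "c > 0" unfolding c_def using N by simp
  have e1: "c * real N powr (real_of_int k - 1/2) = real N powr (-1/2)"
    unfolding c_def by (subst powr_add[symmetric]) simp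
  have e2: "c * real N powr (real_of_int k + 1/2) = real N powr (1/2)"
    unfolding c_def by (subst powr_add[symmetric]) simp
  have "c * x \<in> {real N powr (-1/2) .. real N powr (1/2)}"
  proof -
    have "c * real N powr (real_of_int k - 1/2) \<le> c * x" "c * x \<le> c * real N powr (real_of_int k + 1/2)"
      using x c0 by (auto intro!: mult_left_mono)
    then show ?thesis unfolding e1 e2 by simp
  qed
  moreover have "c * x' \<in> {real N powr (-1/2) .. real N powr (1/2)}"
  proof -
    have "c * real N powr (real_of_int k - 1/2) \<le> c * x'" "c * x' \<le> c * real N powr (real_of_int k + 1/2)"
      using x' c0 by (auto intro!: mult_left_mono)
    then show ?thesis unfolding e1 e2 by simp
  qed
  moreover have "c * x \<le> c * x'" using le c0 by simp
  ultimately have "K (c * x') \<le> K (c * x)" using fk_mono[OF K] by blast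
  then have "c * K (c * x') \<le> c * K (c * x)" using c0 by simp
  then show ?thesis using fk_scale[OF K x] fk_scale[OF K x'] unfolding c_def by simp
qed

lemma K_meas:
  assumes N: "N \<ge> 16" and K: "flat_kernel N \<rho> K"
  shows "K \<in> borel_measurable borel"
proof -
  define Bp where "Bp = (\<lambda>k::int. {real N powr (real_of_int k - 1/2) .. real N powr (real_of_int k + 1/2)})"
  define Bn where "Bn = (\<lambda>k::int. {-(real N powr (real_of_int k + 1/2)) .. -(real N powr (real_of_int k - 1/2))})"
  define C where "C = range Bp \<union> range Bn \<union> {{0}}"
  have N1: "real N > 1" using N by simp
  have cov: "x \<in> \<Union>C" for x
  proof -
    have pos: "\<exists>k. y \<in> Bp k" if y: "y > 0" for y
    proof -
      define k where "k = \<lfloor>log (real N) y + 1/2\<rfloor>"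
      have k1: "real_of_int k \<le> log (real N) y + 1/2" "log (real N) y + 1/2 < real_of_int k + 1"
        unfolding k_def by linarith+
      have yl: "real N powr (log (real N) y) = y" using y N1 by simp
      have "real N powr (real_of_int k - 1/2) \<le> real N powr (log (real N) y)"
        using k1 N1 by (intro powr_mono) auto
      moreover have "real N powr (log (real N) y) \<le> real N powr (real_of_int k + 1/2)"
        using k1 N1 by (intro powr_mono) auto
      ultimately show ?thesis unfolding Bp_def using yl by auto
    qed
    show ?thesis
    proof (cases "x > 0")
      case True then show ?thesis using pos unfolding C_def by blast
    next
      case False
      show ?thesis
      proof (cases "x = 0")
        case True then show ?thesis unfolding C_def by auto
      next
        case False
        then have "- x > 0" using \<open>\<not> x > 0\<close> by simp
        then obtain k where "- x \<in> Bp k" using pos by blast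
        then have "x \<in> Bn k" unfolding Bp_def Bn_def by auto
        then show ?thesis unfolding C_def by blast
      qed
    qed
  qed
  have "(\<lambda>x. - K x) \<in> borel_measurable borel"
  proof (rule borel_measurable_piecewise_mono[of C])
    show "countable C" unfolding C_def by simp
    show "c \<in> sets borel" if "c \<in> C" for c using that unfolding C_def Bp_def Bn_def by auto
    show "\<Union>C = UNIV" using cov by blast
    show "mono_on c (\<lambda>x. - K x)" if "c \<in> C" for c
    proof -
      have "c \<in> range Bp \<or> c \<in> range Bn \<or> c = {0}" using that unfolding C_def by blast
      then show ?thesis
      proof (elim disjE)
        assume "c \<in> range Bp"
        then obtain k where c: "c = Bp k" by blast
        show ?thesis unfolding c
        proof (rule mono_onI)
          fix x y assume xy: "x \<in> Bp k" "y \<in> Bp k" "x \<le> y"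
          show "- K x \<le> - K y" using K_block_anti[OF N K xy(1)[unfolded Bp_def] xy(2)[unfolded Bp_def] xy(3)] by simp
        qed
      next
        assume "c \<in> range Bn"
        then obtain k where c: "c = Bn k" by blast
        show ?thesis unfolding c
        proof (rule mono_onI)
          fix x y assume xy: "x \<in> Bn k" "y \<in> Bn k" "x \<le> y"
          have xm: "- x \<in> Bp k" "- y \<in> Bp k" using xy unfolding Bp_def Bn_def by auto
          have pp: "0 < real N powr (real_of_int k - 1/2)" using N1 by simp
          have nz: "- x \<noteq> 0" "- y \<noteq> 0" using xm pp unfolding Bp_def by auto
          have "K (- x) \<le> K (- y)" using K_block_anti[OF N K xm(2)[unfolded Bp_def] xm(1)[unfolded Bp_def]] xy by simp
          moreover have "K x = - K (- x)" "K y = - K (- y)" using fk_odd[OF K nz(1)] fk_odd[OF K nz(2)] by simp_all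
          ultimately show "- K x \<le> - K y" by simp
        qed
      next
        assume "c = {0}" then show ?thesis by (simp add: mono_on_def)
      qed
    qed
  qed
  then have "(\<lambda>x. - (- K x)) \<in> borel_measurable borel" by measurable
  then show ?thesis by simp
qed



lemma L_sub:
  assumes N: "N \<ge> 16" and y: "y \<in> cantor_L N k j"
  shows "y \<in> cantor_int N k j"
proof -
  note df = dfacts[OF N, of k]
  have "0 \<le> (1/real N)^Suc k" by simp
  then show ?thesis using y df unfolding cantor_L_def cantor_center_def cantor_int_def by auto
qed

lemma center_L: "cantor_center N k j \<in> cantor_L N k j"
  unfolding cantor_L_def by simp

lemma W_meas:
  assumes W: "redistributed_cantor_measure N \<omega>" and k: "1 \<le> k" and j: "1 \<le> j" "j \<le> 2^k"
  shows "odd j \<Longrightarrow> measure \<omega> (cantor_int N (Suc k) (2*j - 1)) = (1 + 1/real N) / 2 * measure \<omega> (cantor_int N k j) \<and>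
           measure \<omega> (cantor_int N (Suc k) (2*j)) = (1 - 1/real N) / 2 * measure \<omega> (cantor_int N k j)"
    and "even j \<Longrightarrow> measure \<omega> (cantor_int N (Suc k) (2*j - 1)) = (1 - 1/real N) / 2 * measure \<omega> (cantor_int N k j) \<and>
           measure \<omega> (cantor_int N (Suc k) (2*j)) = (1 + 1/real N) / 2 * measure \<omega> (cantor_int N k j)"
  using W k j unfolding redistributed_cantor_measure_def by auto

lemma step_point:
  assumes N: "N \<ge> 16" and r: "2/3 \<le> \<rho>" "\<rho> < 1" and K: "flat_kernel N \<rho> K"
    and j': "1 \<le> j'" "j' \<le> 2^Suc k" and y: "y \<in> cantor_L N (Suc k) j'"
    and x: "x \<in> cantor_set N"
  shows "K (y - x) = K (cantor_center N k ((j'+1) div 2) - x) +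
     ((real N ^ Suc k - (if odd j' then 1 else -1) * real N ^ k) * indicator (cantor_int N (Suc (Suc k)) (2*j'-1)) x
      + (- (real N ^ Suc k) - (if odd j' then 1 else -1) * real N ^ k) * indicator (cantor_int N (Suc (Suc k)) (2*j')) x)"
proof -
  define p where "p = (j'+1) div 2"
  define y0 where "y0 = cantor_center N k p"
  have p: "1 \<le> p" "p \<le> 2^k" using j' unfolding p_def by auto
  have jp: "j' = 2*p-1 \<or> j' = 2*p" unfolding p_def by presburger
  have yC: "y \<in> cantor_int N (Suc k) j'" using L_sub[OF N y] .
  have CA: "cantor_int N (Suc k) j' \<subseteq> cantor_int N k p" using child_sub[OF N j'(1)] unfolding p_def .
  have y0L: "y0 \<in> cantor_L N k p" unfolding y0_def by (rule center_L)
  have y0A: "y0 \<in> cantor_int N k p" using L_sub[OF N y0L] .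
  have cms: "cantor_int N (Suc (Suc k)) (2*j'-1) \<subseteq> cantor_int N (Suc k) j'"
            "cantor_int N (Suc (Suc k)) (2*j') \<subseteq> cantor_int N (Suc k) j'"
    using children_sub[OF N j'(1)] by auto
  have cdisj: "cantor_int N (Suc (Suc k)) (2*j'-1) \<inter> cantor_int N (Suc (Suc k)) (2*j') = {}"
    using children_disj[OF N j'(1)] .
  have adisj: "cantor_int N (Suc k) (2*p-1) \<inter> cantor_int N (Suc k) (2*p) = {}"
    using children_disj[OF N p(1)] .
  have main: "K (y - x) = K (y0 - x) + ((real N ^ Suc k - (if odd j' then 1 else -1) * real N ^ k) * indicator (cantor_int N (Suc (Suc k)) (2*j'-1)) x
      + (- (real N ^ Suc k) - (if odd j' then 1 else -1) * real N ^ k) * indicator (cantor_int N (Suc (Suc k)) (2*j')) x)"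
  proof (cases "x \<in> cantor_int N k p")
    case False
    then have "x \<notin> cantor_int N (Suc (Suc k)) (2*j'-1)" "x \<notin> cantor_int N (Suc (Suc k)) (2*j')"
      using cms CA by auto
    moreover have "K (y - x) = K (y0 - x)"
      using outside_const[OF N r K, of k] p x False yC CA y0A by blast
    ultimately show ?thesis by simp
  next
    case True
    have xs: "x \<in> cantor_int N (Suc k) (2*p-1) \<or> x \<in> cantor_int N (Suc k) (2*p)"
      using cantor_split[OF N x True p] .
    show ?thesis
    proof (cases "x \<in> cantor_int N (Suc k) j'")
      case True
      have xs2: "x \<in> cantor_int N (Suc (Suc k)) (2*j'-1) \<or> x \<in> cantor_int N (Suc (Suc k)) (2*j')"
        using cantor_split[OF N x True j'] .
      have Ky0: "K (y0 - x) = (if odd j' then 1 else -1) * real N ^ k"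
        using jp
      proof
        assume jj: "j' = 2*p-1"
        then have "odd j'" using p by presburger
        then show ?thesis using LK(1)[OF N r K p(1) y0L, of x] True jj by simp
      next
        assume jj: "j' = 2*p"
        then show ?thesis using LK(2)[OF N r K p(1) y0L, of x] True jj by simp
      qed
      from xs2 show ?thesis
      proof
        assume xm: "x \<in> cantor_int N (Suc (Suc k)) (2*j'-1)"
        then have "x \<notin> cantor_int N (Suc (Suc k)) (2*j')" using cdisj by auto
        then show ?thesis using LK(1)[OF N r K j'(1) y xm] Ky0 xm by simp
      next
        assume xm: "x \<in> cantor_int N (Suc (Suc k)) (2*j')"
        then have "x \<notin> cantor_int N (Suc (Suc k)) (2*j'-1)" using cdisj by auto
        then show ?thesis using LK(2)[OF N r K j'(1) y xm] Ky0 xm by simp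
      qed
    next
      case False
      then have g0: "x \<notin> cantor_int N (Suc (Suc k)) (2*j'-1)" "x \<notin> cantor_int N (Suc (Suc k)) (2*j')"
        using cms by auto
      from jp show ?thesis
      proof
        assume jj: "j' = 2*p-1"
        then have xa: "x \<in> cantor_int N (Suc k) (2*p)" using xs False by auto
        have "K (y - x) = - (real N ^ k)" using Sib(2)[OF N r K p(1) _ xa, of y] yC jj by simp
        moreover have "K (y0 - x) = - (real N ^ k)" using LK(2)[OF N r K p(1) y0L xa] .
        ultimately show ?thesis using g0 by simp
      next
        assume jj: "j' = 2*p"
        then have xa: "x \<in> cantor_int N (Suc k) (2*p-1)" using xs False by auto
        have "K (y - x) = real N ^ k" using Sib(1)[OF N r K p(1) xa, of y] yC jj by simp
        moreover have "K (y0 - x) = real N ^ k" using LK(1)[OF N r K p(1) y0L xa] .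
        ultimately show ?thesis using g0 by simp
      qed
    qed
  qed
  then show ?thesis unfolding y0_def p_def .
qed



lemma main_ind:
  assumes N: "N \<ge> 16" and r: "2/3 \<le> \<rho>" "\<rho> < 1" and K: "flat_kernel N \<rho> K"
    and W: "redistributed_cantor_measure N \<omega>"
  shows "\<forall>j. 1 \<le> j \<longrightarrow> j \<le> 2^k \<longrightarrow> (\<forall>y\<in>cantor_L N k j. integrable \<omega> (\<lambda>x. K (y - x)) \<and> (\<integral>x. K (y - x) \<partial>\<omega>) = 0)"
proof -
  have s\<omega>: "sets \<omega> = sets borel" and P: "prob_space \<omega>" and nul: "emeasure \<omega> (UNIV - cantor_set N) = 0"
    using W unfolding redistributed_cantor_measure_def by auto
  interpret prob_space \<omega> by (rule P)
  have sp: "space \<omega> = UNIV" using sets_eq_imp_space_eq[OF s\<omega>] by simp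
  have Eb: "cantor_set N \<in> sets borel" unfolding cantor_set_def cantor_int_def by auto
  have AEE: "AE x in \<omega>. x \<in> cantor_set N"
  proof (rule AE_I'[of "UNIV - cantor_set N"])
    show "UNIV - cantor_set N \<in> null_sets \<omega>" using nul Eb s\<omega> by (auto simp: null_sets_def)
    show "{x \<in> space \<omega>. x \<notin> cantor_set N} \<subseteq> UNIV - cantor_set N" by auto
  qed
  have Km: "K \<in> borel_measurable borel" using K_meas[OF N K] .
  have meas: "(\<lambda>x. K (y - x)) \<in> borel_measurable \<omega>" for y
  proof -
    have "(\<lambda>x. K (y - x)) \<in> borel_measurable borel"
      using measurable_compose[OF _ Km, of "\<lambda>x. y - x" borel] by simp
    then show ?thesis by (subst measurable_cong_sets[OF s\<omega> refl])
  qed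
  have ints: "cantor_int N a b \<in> sets \<omega>" for a b using s\<omega> unfolding cantor_int_def by simp
  have intind: "integrable \<omega> (indicator (cantor_int N a b) :: real \<Rightarrow> real)" for a b
    using ints by (intro integrable_real_indicator) (auto simp: less_top[symmetric])
  have intg: "integrable \<omega> (\<lambda>x. c1 * indicator (cantor_int N a b) x + c2 * indicator (cantor_int N a' b') x :: real)" for c1 c2 a b a' b'
    by (simp add: intind)
  have integ: "(\<integral>x. c1 * indicator (cantor_int N a b) x + c2 * indicator (cantor_int N a' b') x \<partial>\<omega>)
      = c1 * measure \<omega> (cantor_int N a b) + c2 * measure \<omega> (cantor_int N a' b')" for c1 c2 a b a' b'
    by (simp add: intind sp)
  have gm: "(\<lambda>x. c1 * indicator (cantor_int N a b) x + c2 * indicator (cantor_int N a' b') x :: real) \<in> borel_measurable \<omega>" for c1 c2 a b a' b'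
    using intg borel_measurable_integrable by blast
  show ?thesis
  proof (induction k)
    case 0
    show ?case
    proof (intro allI impI ballI)
      fix j y assume j: "1 \<le> j" "j \<le> 2^0" and y: "y \<in> cantor_L N 0 j"
      have j1: "j = 1" using j by simp
      have y1: "y \<in> cantor_L N 0 1" using y j1 by simp
      have ae: "AE x in \<omega>. K (y - x) = 1 * indicator (cantor_int N 1 1) x + (-1) * indicator (cantor_int N 1 2) x"
        using AEE
      proof eventually_elim
        case (elim x)
        have x0: "x \<in> cantor_int N 0 1" using elim cantor_sub01 by blast
        have xs: "x \<in> cantor_int N (Suc 0) (2*1-1) \<or> x \<in> cantor_int N (Suc 0) (2*1)"
          using cantor_split[OF N elim x0] by simp
        have dj: "cantor_int N (Suc 0) (2*1-1) \<inter> cantor_int N (Suc 0) (2*1) = {}"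
          using children_disj[OF N, of 1 0] by simp
        from xs show ?case
        proof
          assume xm: "x \<in> cantor_int N (Suc 0) (2*1-1)"
          then have "x \<notin> cantor_int N 1 2" using dj by auto
          then show ?thesis using LK(1)[OF N r K _ y1 xm] xm by simp
        next
          assume xm: "x \<in> cantor_int N (Suc 0) (2*1)"
          then have "x \<notin> cantor_int N 1 1" using dj by auto
          then show ?thesis using LK(2)[OF N r K _ y1 xm] xm by simp
        qed
      qed
      have m1: "measure \<omega> (cantor_int N 1 1) = 1/2" "measure \<omega> (cantor_int N 1 2) = 1/2"
        using W unfolding redistributed_cantor_measure_def by auto
      have "integrable \<omega> (\<lambda>x. K (y - x))"
        using integrable_cong_AE[OF meas gm ae] intg by blast
      moreover have "(\<integral>x. K (y - x) \<partial>\<omega>) = 1 * measure \<omega> (cantor_int N 1 1) + (-1) * measure \<omega> (cantor_int N 1 2)"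
        using integral_cong_AE[OF meas gm ae] integ[of 1 1 1 "-1" 1 2] by (rule trans)
      then have "(\<integral>x. K (y - x) \<partial>\<omega>) = 0" using m1 by simp
      ultimately show "integrable \<omega> (\<lambda>x. K (y - x)) \<and> (\<integral>x. K (y - x) \<partial>\<omega>) = 0" by blast
    qed
  next
    case (Suc k)
    show ?case
    proof (intro allI impI ballI)
      fix j' y assume j': "1 \<le> j'" "j' \<le> 2^Suc k" and y: "y \<in> cantor_L N (Suc k) j'"
      define p where "p = (j'+1) div 2"
      define y0 where "y0 = cantor_center N k p"
      have p: "1 \<le> p" "p \<le> 2^k" using j' unfolding p_def by auto
      have IH: "integrable \<omega> (\<lambda>x. K (y0 - x))" "(\<integral>x. K (y0 - x) \<partial>\<omega>) = 0"
        using Suc.IH p center_L[of N k p] unfolding y0_def by blast+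
      define s :: real where "s = (if odd j' then 1 else -1)"
      define c1 where "c1 = real N ^ Suc k - s * real N ^ k"
      define c2 where "c2 = - (real N ^ Suc k) - s * real N ^ k"
      define g where "g = (\<lambda>x. c1 * indicator (cantor_int N (Suc (Suc k)) (2*j'-1)) x + c2 * indicator (cantor_int N (Suc (Suc k)) (2*j')) x :: real)"
      have ae: "AE x in \<omega>. K (y - x) = K (y0 - x) + g x"
        using AEE
      proof eventually_elim
        case (elim x)
        show ?case using step_point[OF N r K j' y elim] unfolding g_def c1_def c2_def s_def y0_def p_def .
      qed
      have gmeas: "(\<lambda>x. K (y0 - x) + g x) \<in> borel_measurable \<omega>"
        using meas[of y0] gm unfolding g_def by measurable
      have gint: "integrable \<omega> (\<lambda>x. K (y0 - x) + g x)"
        unfolding g_def by (rule Bochner_Integration.integrable_add[OF IH(1) intg])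
      have "integrable \<omega> (\<lambda>x. K (y - x))"
        using integrable_cong_AE[OF meas gmeas ae] gint by blast
      moreover have "(\<integral>x. K (y - x) \<partial>\<omega>) = c1 * measure \<omega> (cantor_int N (Suc (Suc k)) (2*j'-1)) + c2 * measure \<omega> (cantor_int N (Suc (Suc k)) (2*j'))"
      proof -
        have "(\<integral>x. K (y - x) \<partial>\<omega>) = (\<integral>x. K (y0 - x) + g x \<partial>\<omega>)"
          using integral_cong_AE[OF meas gmeas ae] .
        also have "\<dots> = (\<integral>x. K (y0 - x) \<partial>\<omega>) + (\<integral>x. g x \<partial>\<omega>)"
          unfolding g_def by (rule Bochner_Integration.integral_add[OF IH(1) intg])
        also have "\<dots> = c1 * measure \<omega> (cantor_int N (Suc (Suc k)) (2*j'-1)) + c2 * measure \<omega> (cantor_int N (Suc (Suc k)) (2*j'))"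
          using IH(2) integ unfolding g_def by simp
        finally show ?thesis .
      qed
      moreover have "c1 * measure \<omega> (cantor_int N (Suc (Suc k)) (2*j'-1)) + c2 * measure \<omega> (cantor_int N (Suc (Suc k)) (2*j')) = 0"
      proof -
        define m where "m = measure \<omega> (cantor_int N (Suc k) j')"
        have Np: "real N > 0" using N by simp
        show ?thesis
        proof (cases "odd j'")
          case True
          then have "measure \<omega> (cantor_int N (Suc (Suc k)) (2*j'-1)) = (1 + 1/real N) / 2 * m"
                    "measure \<omega> (cantor_int N (Suc (Suc k)) (2*j')) = (1 - 1/real N) / 2 * m"
            using W_meas(1)[OF W _ j'] unfolding m_def by auto
          note meq = this
          show ?thesis unfolding c1_def c2_def s_def meq using True Np by (simp add: field_simps)
        next
          case False
          then have "measure \<omega> (cantor_int N (Suc (Suc k)) (2*j'-1)) = (1 - 1/real N) / 2 * m"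
                    "measure \<omega> (cantor_int N (Suc (Suc k)) (2*j')) = (1 + 1/real N) / 2 * m"
            using W_meas(2)[OF W _ j'] unfolding m_def by auto
          note meq = this
          show ?thesis unfolding c1_def c2_def s_def meq using False Np by (simp add: field_simps)
        qed
      qed
      ultimately show "integrable \<omega> (\<lambda>x. K (y - x)) \<and> (\<integral>x. K (y - x) \<partial>\<omega>) = 0" by simp
    qed
  qed
qed

theorem mainTheorem3:
  fixes N :: nat and \<rho> :: real and K :: "real \<Rightarrow> real" and \<omega> :: "real measure"
  assumes "N \<ge> 16" and "2/3 \<le> \<rho>" and "\<rho> < 1"
    and "flat_kernel N \<rho> K"
    and "redistributed_cantor_measure N \<omega>"
  shows "\<forall>k j. j \<in> {1..2^k} \<longrightarrow>
           (\<forall>y\<in>cantor_L N k j. integrable \<omega> (\<lambda>x. K (y - x)) \<and> H_flat K \<omega> y = 0)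
           \<and> H_flat K \<omega> (cantor_center N k j) = 0"
proof (intro allI impI conjI ballI)
  fix k j :: nat assume j: "j \<in> {1..2^k}"
  have M: "\<forall>y\<in>cantor_L N k j. integrable \<omega> (\<lambda>x. K (y - x)) \<and> (\<integral>x. K (y - x) \<partial>\<omega>) = 0"
    using main_ind[OF assms, of k] j by auto
  {
    fix y assume "y \<in> cantor_L N k j"
    then show "integrable \<omega> (\<lambda>x. K (y - x))" "H_flat K \<omega> y = 0" using M unfolding H_flat_def by auto
  }
  show "H_flat K \<omega> (cantor_center N k j) = 0" using M center_L[of N k j] unfolding H_flat_def by auto
qed


end
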